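(* Let $K\ge 2$ and $N\ge 1$ be integers, $g>0$, $d>0$, $x_0\in\mathbb{R}$, and consider the $K$-PAM Gaussian channel $Y=gX+W$, where $X$ takes values in $\{x_i=x_0+id: i=0,1,\dots,K-1\}$ with a probability distribution $P_X$ satisfying $P_X(x_i)>0$ for all $i$, and $W\sim\mathcal N(0,1)$ is independent of $X$; write $f(y\mid x)=\frac{1}{\sqrt{2\pi}}e^{-(y-gx)^2/2}$. Let $Z:\mathbb{R}\to\{1,\dots,N\}$ be a quantizer that maximizes the mutual information $I(X;Z(Y))$, and assume the resulting posteriors satisfy $P_{X|Z}(x\mid z)>0$ for all $x$ and all $z$ in the range of $Z$. For each such $z$ define $$S(z)=\Big\{y\in\mathbb{R}:\ \sum_{x}P_X(x)f(y\mid x)\ln P_{X|Z}(x\mid z)\ \ge\ \sum_{x}P_X(x)f(y\mid x)\ln P_{X|Z}(x\mid z')\ \text{ for all } z'\neq z \text{ in the range of } Z\Big\}$$ (the set of channel outputs assigned to $z$ by the optimality condition $Z(y)\in\arg\max_{z}\sum_x P_X(x)f(y\mid x)\ln P_{X|Z}(x\mid z)$ satisfied by capacity-maximizing quantizers). Then each $S(z)$ is a union of at most $(N-1)\lfloor\frac{K-1}{2}\rfloor+1$ pairwise disjoint intervals.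
   Context: A quantizer is any measurable map $Z:\mathbb{R}\to\{1,\dots,N\}$ applied to the channel output; $P_{X|Z}$ denotes the conditional distribution of the input given the quantized output $Z(Y)$. Intervals may be unbounded or degenerate (single points). *)

theory Defs
  imports "HOL-Probability.Probability"
begin

definition pam_pt :: "real \<Rightarrow> real \<Rightarrow> nat \<Rightarrow> real" where
  "pam_pt x0 d i = x0 + real i * d"

definition chan_dens :: "real \<Rightarrow> real \<Rightarrow> real \<Rightarrow> real" where
  "chan_dens g x y = normal_density (g * x) 1 y"

definition is_quantizer :: "nat \<Rightarrow> (real \<Rightarrow> nat) \<Rightarrow> bool" where
  "is_quantizer N Z \<longleftrightarrow> (\<forall>y. Z y \<in> {1..N}) \<and> (\<forall>z. Z -` {z} \<in> sets borel)"

definition joint_prob ::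
  "(nat \<Rightarrow> real) \<Rightarrow> real \<Rightarrow> real \<Rightarrow> real \<Rightarrow> (real \<Rightarrow> nat) \<Rightarrow> nat \<Rightarrow> nat \<Rightarrow> real" where
  "joint_prob PX g x0 d Z i z =
     PX i * (LINT y : (Z -` {z}) | lborel. chan_dens g (pam_pt x0 d i) y)"

definition out_prob ::
  "nat \<Rightarrow> (nat \<Rightarrow> real) \<Rightarrow> real \<Rightarrow> real \<Rightarrow> real \<Rightarrow> (real \<Rightarrow> nat) \<Rightarrow> nat \<Rightarrow> real" where
  "out_prob K PX g x0 d Z z = (\<Sum>i<K. joint_prob PX g x0 d Z i z)"

definition posterior ::
  "nat \<Rightarrow> (nat \<Rightarrow> real) \<Rightarrow> real \<Rightarrow> real \<Rightarrow> real \<Rightarrow> (real \<Rightarrow> nat) \<Rightarrow> nat \<Rightarrow> nat \<Rightarrow> real" where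
  "posterior K PX g x0 d Z i z = joint_prob PX g x0 d Z i z / out_prob K PX g x0 d Z z"

definition mutual_info ::
  "nat \<Rightarrow> nat \<Rightarrow> (nat \<Rightarrow> real) \<Rightarrow> real \<Rightarrow> real \<Rightarrow> real \<Rightarrow> (real \<Rightarrow> nat) \<Rightarrow> real" where
  "mutual_info K N PX g x0 d Z =
     (\<Sum>i<K. \<Sum>z\<in>{1..N}.
        (let p = joint_prob PX g x0 d Z i z in
         if p = 0 then 0 else p * ln (p / (PX i * out_prob K PX g x0 d Z z))))"

definition decision_set ::
  "nat \<Rightarrow> (nat \<Rightarrow> real) \<Rightarrow> real \<Rightarrow> real \<Rightarrow> real \<Rightarrow> (real \<Rightarrow> nat) \<Rightarrow> nat \<Rightarrow> real set" where
  "decision_set K PX g x0 d Z z =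
     {y. \<forall>z'\<in>range Z. z' \<noteq> z \<longrightarrow>
          (\<Sum>i<K. PX i * chan_dens g (pam_pt x0 d i) y * ln (posterior K PX g x0 d Z i z))
          \<ge> (\<Sum>i<K. PX i * chan_dens g (pam_pt x0 d i) y * ln (posterior K PX g x0 d Z i z'))}"

end

theory Submission
  imports Defs "HOL-Computational_Algebra.Polynomial"
begin


definition alt :: "(real \<Rightarrow> real) \<Rightarrow> nat \<Rightarrow> bool" where
"alt P m \<longleftrightarrow> (\<forall>k s w. (\<forall>i\<le>k. P (s i) \<ge> 0) \<longrightarrow> (\<forall>i<k. P (w i) < 0 \<and> s i < w i \<and> w i < s (Suc i)) \<longrightarrow> k \<le> m)"

lemma mono_idx:
  fixes u :: "nat \<Rightarrow> real"
  assumes "\<forall>i<r. u i < u (Suc i)" "i < j" "j \<le> r"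
  shows "u i < u j"
  using assms(2,3)
proof (induction j)
  case 0 then show ?case by simp
next
  case (Suc j)
  then show ?case using assms(1)
    by (metis Suc_le_lessD less_Suc_eq less_imp_le_nat order.strict_trans)
qed


thm_deps mono_idx

lemma strict_alt_roots:
  fixes q :: "real poly" and u :: "nat \<Rightarrow> real"
  assumes inc: "\<forall>i<r. u i < u (Suc i)" and sg: "\<forall>i<r. poly q (u i) * poly q (u (Suc i)) < 0"
  shows "r \<le> degree q"
proof (cases "r = 0")
  case True then show ?thesis by simp
next
  case False
  have q0: "q \<noteq> 0" using sg False by (metis mult_zero_left neq0_conv order_less_irrefl poly_0)
  have "\<forall>i<r. \<exists>x. u i < x \<and> x < u (Suc i) \<and> poly q x = 0"
    using inc sg poly_IVT by blast
  then obtain \<rho> where rho: "\<And>i. i<r \<Longrightarrow> u i < \<rho> i \<and> \<rho> i < u (Suc i) \<and> poly q (\<rho> i) = 0"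
    by metis
  have inj: "inj_on \<rho> {..<r}"
  proof (rule inj_onI)
    fix i j assume ij: "i \<in> {..<r}" "j \<in> {..<r}" "\<rho> i = \<rho> j"
    show "i = j"
    proof (rule ccontr)
      assume "i \<noteq> j"
      then consider "i < j" | "j < i" by linarith
      then show False
      proof cases
        case 1
        have "u (Suc i) \<le> u j" using mono_idx[OF inc, of "Suc i" j] 1 ij by (cases "Suc i = j") auto
        then show False using rho ij 1 by (metis lessThan_iff not_less order.strict_trans)
      next
        case 2
        have "u (Suc j) \<le> u i" using mono_idx[OF inc, of "Suc j" i] 2 ij by (cases "Suc j = i") auto
        then show False using rho ij 2 by (metis lessThan_iff not_less order.strict_trans)
      qed
    qed
  qed
  have "r = card (\<rho> ` {..<r})" using inj by (simp add: card_image)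
  also have "\<dots> \<le> card {x. poly q x = 0}"
    by (rule card_mono) (use q0 poly_roots_finite rho in auto)
  also have "\<dots> \<le> degree q" by (rule card_poly_roots_bound[OF q0])
  finally show ?thesis .
qed


thm_deps strict_alt_roots

lemma poly_alt:
  fixes p :: "real poly"
  assumes "\<forall>i\<le>k. poly p (s i) \<ge> 0" "\<forall>i<k. poly p (w i) < 0 \<and> s i < w i \<and> w i < s (Suc i)"
  shows "2 * k \<le> degree p"
proof (cases "k = 0")
  case True then show ?thesis by simp
next
  case False
  have "\<forall>i<k. \<exists>x. s i < x \<and> x < w i \<and> poly (pderiv p) x < 0"
  proof (intro allI impI)
    fix i assume i: "i < k"
    obtain x where x: "s i < x" "x < w i" "poly p (w i) - poly p (s i) = (w i - s i) * poly (pderiv p) x"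
      using poly_MVT[of "s i" "w i" p] assms i by auto
    have "poly p (w i) < 0" "poly p (s i) \<ge> 0" using assms i by auto
    then have "(w i - s i) * poly (pderiv p) x < 0" using x(3) by linarith
    then have "poly (pderiv p) x < 0" using x(1,2) by (simp add: mult_less_0_iff)
    then show "\<exists>x. s i < x \<and> x < w i \<and> poly (pderiv p) x < 0" using x by blast
  qed
  then obtain a where a: "\<And>i. i<k \<Longrightarrow> s i < a i \<and> a i < w i \<and> poly (pderiv p) (a i) < 0" by metis
  have "\<forall>i<k. \<exists>x. w i < x \<and> x < s (Suc i) \<and> poly (pderiv p) x > 0"
  proof (intro allI impI)
    fix i assume i: "i < k"
    obtain x where x: "w i < x" "x < s (Suc i)" "poly p (s (Suc i)) - poly p (w i) = (s (Suc i) - w i) * poly (pderiv p) x"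
      using poly_MVT[of "w i" "s (Suc i)" p] assms i by auto
    have "poly p (w i) < 0" "poly p (s (Suc i)) \<ge> 0" using assms i by auto
    then have "(s (Suc i) - w i) * poly (pderiv p) x > 0" using x(3) by linarith
    then have "poly (pderiv p) x > 0" using x(1,2) by (simp add: zero_less_mult_iff)
    then show "\<exists>x. w i < x \<and> x < s (Suc i) \<and> poly (pderiv p) x > 0" using x by blast
  qed
  then obtain b where b: "\<And>i. i<k \<Longrightarrow> w i < b i \<and> b i < s (Suc i) \<and> poly (pderiv p) (b i) > 0" by metis
  define u where "u j = (if even j then a (j div 2) else b (j div 2))" for j
  have inc: "\<forall>j<2*k-1. u j < u (Suc j)"
  proof (intro allI impI)
    fix j assume j: "j < 2*k-1"
    show "u j < u (Suc j)"
    proof (cases "even j")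
      case True
      then have "u j = a (j div 2)" "u (Suc j) = b (j div 2)" "j div 2 < k" using j by (auto simp: u_def)
      then show ?thesis using a b by (metis order.strict_trans)
    next
      case False
      then have "u j = b (j div 2)" "u (Suc j) = a (Suc (j div 2))" "Suc (j div 2) < k" "j div 2 < k" using j
        by (auto simp: u_def elim!: oddE)
      then show ?thesis using a b by (metis order.strict_trans)
    qed
  qed
  have sg: "\<forall>j<2*k-1. poly (pderiv p) (u j) * poly (pderiv p) (u (Suc j)) < 0"
  proof (intro allI impI)
    fix j assume j: "j < 2*k-1"
    show "poly (pderiv p) (u j) * poly (pderiv p) (u (Suc j)) < 0"
    proof (cases "even j")
      case True
      then have "u j = a (j div 2)" "u (Suc j) = b (j div 2)" "j div 2 < k" using j by (auto simp: u_def)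
      then show ?thesis using a b by (simp add: mult_neg_pos)
    next
      case False
      then have "u j = b (j div 2)" "u (Suc j) = a (Suc (j div 2))" "Suc (j div 2) < k" "j div 2 < k" using j
        by (auto simp: u_def elim!: oddE)
      then show ?thesis using a b by (simp add: mult_pos_neg)
    qed
  qed
  have "2*k-1 \<le> degree (pderiv p)" by (rule strict_alt_roots[OF inc sg])
  then show ?thesis using False by (simp add: degree_pderiv)
qed




thm_deps poly_alt

lemma alt_polysum: "alt (\<lambda>t. \<Sum>i<n. c i * t^i) ((n-1) div 2)"
proof -
  define q :: "real poly" where "q = (\<Sum>i<n. monom (c i) i)"
  have pq: "poly q t = (\<Sum>i<n. c i * t^i)" for t by (simp add: q_def poly_sum poly_monom)
  have dq: "degree q \<le> n - 1" unfolding q_def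
    by (rule degree_sum_le) (auto intro: order.trans[OF degree_monom_le])
  show ?thesis unfolding alt_def
  proof (intro allI impI)
    fix k s w
    assume "\<forall>j\<le>k. 0 \<le> (\<Sum>i<n. c i * s j ^ i)" and "\<forall>j<k. (\<Sum>i<n. c i * w j ^ i) < 0 \<and> s j < w j \<and> w j < s (Suc j)"
    then have "2*k \<le> degree q" by (intro poly_alt[of k q s w]) (simp_all add: pq)
    then show "k \<le> (n-1) div 2" using dq by linarith
  qed
qed


thm_deps alt_polysum

lemma alt_transfer:
  assumes "alt F m" "\<forall>y. E y > 0" "\<forall>x y. x < y \<longrightarrow> h x < h y"
  shows "alt (\<lambda>y. E y * F (h y)) m"
  unfolding alt_def
proof (intro allI impI)
  fix k s w
  assume a1: "\<forall>i\<le>k. 0 \<le> E (s i) * F (h (s i))"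
    and a2: "\<forall>i<k. E (w i) * F (h (w i)) < 0 \<and> s i < w i \<and> w i < s (Suc i)"
  have "\<forall>i\<le>k. 0 \<le> F ((h \<circ> s) i)" using a1 assms(2) by (simp add: zero_le_mult_iff) (meson not_less)
  moreover have "\<forall>i<k. F ((h \<circ> w) i) < 0 \<and> (h \<circ> s) i < (h \<circ> w) i \<and> (h \<circ> w) i < (h \<circ> s) (Suc i)"
  proof (intro allI impI)
    fix i assume i: "i < k"
    have "E (w i) > 0" using assms(2) by blast
    then have "F (h (w i)) < 0" using a2 i by (meson not_less mult_nonneg_nonneg less_imp_le)
    then show "F ((h \<circ> w) i) < 0 \<and> (h \<circ> s) i < (h \<circ> w) i \<and> (h \<circ> w) i < (h \<circ> s) (Suc i)"
      using a2 i assms(3) by simp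
  qed
  ultimately show "k \<le> m" using assms(1) unfolding alt_def by blast
qed


thm_deps alt_transfer

lemma chan_factor:
  "chan_dens g (pam_pt x0 d i) y =
     exp (- ((y-g*x0)^2) / 2) / sqrt (2*pi) * exp (g*d*y)^i * exp (-(g*x0*g*d*real i) - (g*d*real i)^2/2)"
proof -
  have e: "- ((y - g*(x0 + real i * d))^2) / (2*1^2) = - ((y-g*x0)^2) / 2 + real i * (g*d*y) + (-(g*x0*g*d*real i) - (g*d*real i)^2/2)"
    by (simp add: power2_eq_square field_simps)
  show ?thesis
    unfolding chan_dens_def normal_density_def pam_pt_def e exp_add exp_of_nat_mult
    by simp
qed


thm_deps chan_factor

lemma card_sub_alt:
  fixes s w :: "nat \<Rightarrow> real"
  assumes alt: "alt P m" and sw: "\<forall>i<n. s i < w i \<and> w i < s (Suc i)" and ps: "\<forall>i\<le>n. P (s i) \<ge> 0"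
    and I: "I \<subseteq> {..<n}" "\<forall>i\<in>I. P (w i) < 0"
  shows "card I \<le> m"
proof -
  have finI: "finite I" using I finite_subset by blast
  define xs where "xs = sorted_list_of_set I"
  define k where "k = card I"
  have len: "length xs = k" by (simp add: xs_def k_def)
  have setxs: "set xs = I" using finI by (simp add: xs_def)
  have sxs: "sorted_wrt (<) xs" by (simp add: xs_def)
  have inc: "\<forall>i<n. s i < s (Suc i)" using sw by force
  have smono: "i \<le> j \<Longrightarrow> j \<le> n \<Longrightarrow> s i \<le> s j" for i j
    using mono_idx[OF inc, of i j] by (cases "i = j") auto
  have xsI: "l < k \<Longrightarrow> xs ! l \<in> I" for l using len setxs nth_mem by blast
  show ?thesis
  proof (cases "k = 0")
    case True then show ?thesis by (simp add: k_def)
  next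
    case False
    define s' where "s' l = (if l < k then s (xs ! l) else s (Suc (xs ! (k-1))))" for l
    define w' where "w' l = w (xs ! l)" for l
    have "\<forall>l\<le>k. P (s' l) \<ge> 0"
    proof (intro allI impI)
      fix l assume "l \<le> k"
      show "P (s' l) \<ge> 0"
      proof (cases "l < k")
        case True then show ?thesis using xsI[OF True] I ps by (auto simp: s'_def)
      next
        case False
        have "xs ! (k-1) \<in> I" using xsI \<open>k \<noteq> 0\<close> by simp
        then have "Suc (xs ! (k-1)) \<le> n" using I by auto
        then show ?thesis using False ps by (simp add: s'_def)
      qed
    qed
    moreover have "\<forall>l<k. P (w' l) < 0 \<and> s' l < w' l \<and> w' l < s' (Suc l)"
    proof (intro allI impI)
      fix l assume l: "l < k"
      have xl: "xs ! l \<in> I" "xs ! l < n" using xsI[OF l] I by auto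
      have "w' l < s' (Suc l)"
      proof (cases "Suc l < k")
        case True
        have "xs ! l < xs ! Suc l" using sorted_wrt_nth_less[OF sxs, of l "Suc l"] True len by simp
        moreover have "xs ! Suc l < n" using xsI[OF True] I by auto
        ultimately have "s (Suc (xs ! l)) \<le> s (xs ! Suc l)" using smono by simp
        then show ?thesis using sw xl True by (simp add: s'_def w'_def) (meson less_le_trans)
      next
        case False
        then have "l = k - 1" using l by simp
        then show ?thesis using sw xl False by (simp add: s'_def w'_def)
      qed
      then show "P (w' l) < 0 \<and> s' l < w' l \<and> w' l < s' (Suc l)"
        using xl sw I l by (simp add: s'_def w'_def)
    qed
    ultimately have "k \<le> m" using alt unfolding alt_def by blast
    then show ?thesis by (simp add: k_def)
  qed
qed




thm_deps card_sub_alt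

lemma comp_key:
  fixes S :: "real set" and P :: "'j \<Rightarrow> real \<Rightarrow> real"
  assumes fin: "finite J" and S: "S = {y. \<forall>j\<in>J. P j y \<ge> 0}" and alt: "\<forall>j\<in>J. alt (P j) m"
    and C: "C \<subseteq> components S" "finite C"
  shows "card C \<le> card J * m + 1"
proof (cases "C = {}")
  case True then show ?thesis by simp
next
  case False
  have "\<forall>X\<in>C. \<exists>x. x \<in> X" using C in_components_nonempty by blast
  then obtain r where r: "\<And>X. X \<in> C \<Longrightarrow> r X \<in> X" by metis
  have disj: "X \<in> C \<Longrightarrow> Y \<in> C \<Longrightarrow> X \<noteq> Y \<Longrightarrow> X \<inter> Y = {}" for X Y
    using pairwise_disjoint_components[of S] C unfolding pairwise_def by blast
  have inj: "inj_on r C"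
  proof (rule inj_onI)
    fix X Y assume "X \<in> C" "Y \<in> C" "r X = r Y"
    then show "X = Y" using r[of X] r[of Y] disj[of X Y] by auto
  qed
  define T where "T = r ` C"
  have cT: "card T = card C" using inj by (simp add: T_def card_image)
  have finT: "finite T" using C by (simp add: T_def)
  have TS: "T \<subseteq> S" using r C in_components_subset unfolding T_def by blast
  have sep: "\<exists>w. x < w \<and> w < y \<and> w \<notin> S" if xy: "x \<in> T" "y \<in> T" "x < y" for x y
  proof (rule ccontr)
    assume "\<not> ?thesis"
    then have sub: "{x..y} \<subseteq> S"
    proof (intro subsetI)
      fix v assume nv: "\<not> (\<exists>w. x < w \<and> w < y \<and> w \<notin> S)" and v: "v \<in> {x..y}"
      show "v \<in> S"
      proof (cases "v = x \<or> v = y")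
        case True then show ?thesis using xy TS by auto
      next
        case False then show ?thesis using nv v by force
      qed
    qed
    obtain X Y where XY: "X \<in> C" "Y \<in> C" "x = r X" "y = r Y" using xy T_def by auto
    have ccX: "connected_component_set S x = X"
    proof -
      obtain x1 where "X = connected_component_set S x1" using XY C components_iff by blast
      then show ?thesis using connected_component_eq r XY by metis
    qed
    have "{x..y} \<subseteq> connected_component_set S x"
      by (rule connected_component_maximal) (use sub xy in auto)
    then have "y \<in> X" using ccX xy by (metis atLeastAtMost_iff less_imp_le order_refl subsetD)
    then have "X = Y" using disj XY r by blast
    then show False using XY xy by simp
  qed
  define xs where "xs = sorted_list_of_set T"
  define c where "c = card C"
  define n where "n = c - 1"
  have len: "length xs = c" using cT by (simp add: xs_def c_def)
  have setxs: "set xs = T" using finT by (simp add: xs_def)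
  have sxs: "sorted_wrt (<) xs" by (simp add: xs_def)
  have cpos: "c \<ge> 1" using False C by (simp add: c_def Suc_leI card_gt_0_iff)
  define s where "s i = xs ! i" for i
  have sT: "i \<le> n \<Longrightarrow> s i \<in> T" for i
  proof -
    assume "i \<le> n"
    then have "i < length xs" using len cpos by (simp add: n_def)
    then show "s i \<in> T" using setxs nth_mem unfolding s_def by blast
  qed
  have "\<forall>i<n. \<exists>w. s i < w \<and> w < s (Suc i) \<and> w \<notin> S"
  proof (intro allI impI)
    fix i assume i: "i < n"
    have "s i < s (Suc i)" using sorted_wrt_nth_less[OF sxs, of i "Suc i"] i len
      by (simp add: s_def n_def)
    moreover have "s i \<in> T" "s (Suc i) \<in> T" using sT i by auto
    ultimately show "\<exists>w. s i < w \<and> w < s (Suc i) \<and> w \<notin> S" using sep by blast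
  qed
  then obtain w where w: "\<And>i. i < n \<Longrightarrow> s i < w i \<and> w i < s (Suc i) \<and> w i \<notin> S" by metis
  have "\<forall>i<n. \<exists>j\<in>J. P j (w i) < 0"
  proof (intro allI impI)
    fix i assume "i < n"
    then have "w i \<notin> S" using w by blast
    then show "\<exists>j\<in>J. P j (w i) < 0" using S by (simp add: not_le)
  qed
  then obtain f where f: "\<And>i. i < n \<Longrightarrow> f i \<in> J \<and> P (f i) (w i) < 0" by metis
  have U: "{..<n} = (\<Union>j\<in>J. {i\<in>{..<n}. f i = j})" using f by auto
  have "n = card (\<Union>j\<in>J. {i\<in>{..<n}. f i = j})" by (subst U[symmetric]) simp
  also have "\<dots> = (\<Sum>j\<in>J. card {i\<in>{..<n}. f i = j})"
    by (rule card_UN_disjoint) (use fin in auto)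
  also have "\<dots> \<le> card J * m"
  proof -
    have "(\<Sum>j\<in>J. card {i\<in>{..<n}. f i = j}) \<le> of_nat (card J) * m"
    proof (rule sum_bounded_above)
      fix j assume j: "j \<in> J"
      show "card {i\<in>{..<n}. f i = j} \<le> m"
      proof (rule card_sub_alt[of "P j" m n s w])
        show "alt (P j) m" using alt j by blast
        show "\<forall>i<n. s i < w i \<and> w i < s (Suc i)" using w by blast
        show "\<forall>i\<le>n. P j (s i) \<ge> 0"
        proof (intro allI impI)
          fix i assume "i \<le> n"
          then have "s i \<in> S" using sT TS by blast
          then have "\<forall>j\<in>J. P j (s i) \<ge> 0" using S by simp
          then show "P j (s i) \<ge> 0" using j by blast
        qed
        show "{i\<in>{..<n}. f i = j} \<subseteq> {..<n}" by blast
        show "\<forall>i\<in>{i\<in>{..<n}. f i = j}. P j (w i) < 0" using f by auto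
      qed
    qed
    then show ?thesis by simp
  qed
  finally show ?thesis using cpos by (simp add: c_def n_def)
qed


thm_deps comp_key

lemma comp_bound:
  fixes S :: "real set" and P :: "'j \<Rightarrow> real \<Rightarrow> real"
  assumes fin: "finite J" and S: "S = {y. \<forall>j\<in>J. P j y \<ge> 0}" and alt: "\<forall>j\<in>J. alt (P j) m"
  shows "finite (components S) \<and> card (components S) \<le> card J * m + 1"
proof -
  have fc: "finite (components S)"
  proof (rule ccontr)
    assume "infinite (components S)"
    then obtain C where C: "C \<subseteq> components S" "finite C" "card C = card J * m + 2"
      using infinite_arbitrarily_large by blast
    have "card C \<le> card J * m + 1" by (rule comp_key[OF fin S alt C(1,2)])
    then show False using C(3) by simp
  qed
  moreover have "card (components S) \<le> card J * m + 1" by (rule comp_key[OF fin S alt _ fc]) simp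
  ultimately show ?thesis by blast
qed




thm_deps comp_bound

theorem theorem1:
  fixes K N :: nat and g d x0 :: real and PX :: "nat \<Rightarrow> real" and Z :: "real \<Rightarrow> nat"
  assumes "K \<ge> 2" and "N \<ge> 1" and "g > 0" and "d > 0"
    and "\<forall>i<K. PX i > 0" and "(\<Sum>i<K. PX i) = 1"
    and "is_quantizer N Z"
    and "\<forall>Z'. is_quantizer N Z' \<longrightarrow> mutual_info K N PX g x0 d Z' \<le> mutual_info K N PX g x0 d Z"
    and "\<forall>z\<in>range Z. \<forall>i<K. posterior K PX g x0 d Z i z > 0"
  shows "\<forall>z\<in>range Z. \<exists>F. finite F \<and> card F \<le> (N - 1) * ((K - 1) div 2) + 1
            \<and> (\<forall>I\<in>F. is_interval I) \<and> disjoint F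
            \<and> \<Union>F = decision_set K PX g x0 d Z z"
proof
  fix z assume z: "z \<in> range Z"
  define J where "J = range Z - {z}"
  have rZ: "range Z \<subseteq> {1..N}" using assms(7) unfolding is_quantizer_def by auto
  have finR: "finite (range Z)" using rZ finite_subset by blast
  have finJ: "finite J" using finR by (simp add: J_def)
  have cJ: "card J \<le> N - 1"
  proof -
    have "card (range Z) \<le> N" using card_mono[OF _ rZ] by simp
    then show ?thesis using z finR by (simp add: J_def card_Diff_singleton)
  qed
  define L where "L i j = ln (posterior K PX g x0 d Z i z) - ln (posterior K PX g x0 d Z i j)" for i j
  define P where "P j y = (\<Sum>i<K. PX i * chan_dens g (pam_pt x0 d i) y * L i j)" for j y
  define S where "S = decision_set K PX g x0 d Z z"
  have Seq: "S = {y. \<forall>j\<in>J. P j y \<ge> 0}"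
  proof -
    have "(\<Sum>i<K. PX i * chan_dens g (pam_pt x0 d i) y * ln (posterior K PX g x0 d Z i z))
          \<ge> (\<Sum>i<K. PX i * chan_dens g (pam_pt x0 d i) y * ln (posterior K PX g x0 d Z i j))
          \<longleftrightarrow> P j y \<ge> 0" for y j
      by (simp add: P_def L_def right_diff_distrib sum_subtractf)
    then show ?thesis unfolding S_def decision_set_def J_def by auto
  qed
  define E where "E y = exp (- ((y-g*x0)^2) / 2) / sqrt (2*pi)" for y
  define h where "h y = exp (g*d*y)" for y
  have altP: "\<forall>j\<in>J. alt (P j) ((K-1) div 2)"
  proof
    fix j
    define c where "c i = PX i * exp (-(g*x0*g*d*real i) - (g*d*real i)^2/2) * L i j" for i
    have Pf: "P j = (\<lambda>y. E y * (\<lambda>t. \<Sum>i<K. c i * t^i) (h y))"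
    proof
      fix y
      show "P j y = E y * (\<lambda>t. \<Sum>i<K. c i * t^i) (h y)"
        unfolding P_def chan_factor c_def E_def h_def
        by (simp add: sum_distrib_left mult_ac)
    qed
    have "alt (\<lambda>y. E y * (\<lambda>t. \<Sum>i<K. c i * t^i) (h y)) ((K-1) div 2)"
    proof (rule alt_transfer[OF alt_polysum])
      show "\<forall>y. 0 < E y" by (simp add: E_def)
      show "\<forall>x y. x < y \<longrightarrow> h x < h y" using assms(3,4) by (simp add: h_def)
    qed
    then show "alt (P j) ((K-1) div 2)" using Pf by simp
  qed
  have cb: "finite (components S) \<and> card (components S) \<le> card J * ((K-1) div 2) + 1"
    by (rule comp_bound[OF finJ Seq altP])
  show "\<exists>F. finite F \<and> card F \<le> (N - 1) * ((K - 1) div 2) + 1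
            \<and> (\<forall>I\<in>F. is_interval I) \<and> disjoint F
            \<and> \<Union>F = decision_set K PX g x0 d Z z"
  proof (intro exI conjI)
    show "finite (components S)" using cb by blast
    have "card J * ((K-1) div 2) \<le> (N - 1) * ((K - 1) div 2)" using cJ by (rule mult_right_mono) simp
    then show "card (components S) \<le> (N - 1) * ((K - 1) div 2) + 1" using cb by linarith
    show "\<forall>I\<in>components S. is_interval I"
      using in_components_connected is_interval_connected_1 by blast
    show "disjoint (components S)"
      using pairwise_disjoint_components unfolding disjoint_def pairwise_def disjnt_def by blast
    show "\<Union>(components S) = decision_set K PX g x0 d Z z" by (simp add: S_def)
  qed
qed


thm_deps theorem1

end
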